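(* For all $\alpha,\beta\ge1$ and $d\in\mathbb{Z}\setminus\{0\}$, $\widetilde{\epsilon'_d}(\mathcal{R}_{\alpha,\beta})\subset\mathcal{Q}_{\alpha,\beta}$.
   Context: Let $k$ be a field of characteristic zero, $n\ge3$, $k[t,\mathbf{x}]=k[t,x_1,\ldots,x_n]$. Let $\widetilde{D'}=\sum_{j=2}^{n}(j-1)\,x_{j-1}\,\partial/\partial x_j$ as a derivation of $k[t,\mathbf{x}]$ killing $t$, and for $d\in k$, $\widetilde{\epsilon'_d}=\exp(d\widetilde{D'})$, $\exp E(g)=\sum_{i\ge0}E^i(g)/i!$. For nonzero $p=\sum u_{i_0,\ldots,i_n}t^{i_0}x_1^{i_1}\cdots x_n^{i_n}$, $\mathrm{supp}(p)$ is the set of exponent vectors with nonzero coefficient, $\deg_{\mathbf w}(p)=\max\{\sum_j i_jw_j:(i_0,\ldots,i_n)\in\mathrm{supp}(p)\}$, and $\mathrm{lt}(p)$ is the leading term for the lexicographic order with $t>x_1>\cdots>x_n$. Let $\mathbf{w}_3=(0,1,\ldots,1)$ (weight $0$ on $t$, $1$ on each $x_j$). For $\alpha,\beta\ge1$: $\mathcal{Q}_{\alpha,\beta}$ is the set of nonzero $p$ with $\deg_{\mathbf{w}_3}(p)\le\beta$ and $\mathrm{lt}(p)\in k^*t^\alpha x_1^\beta$; $\mathcal{R}_{\alpha,\beta}$ is the set of nonzero $p$ with $\deg_{\mathbf{w}_3}(p)\le\beta$ and $\mathrm{lt}(p)\in k^*t^\alpha x_n^\beta$. *)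

theory Defs
  imports Main "HOL-Library.Poly_Mapping"
begin

text \<open>An exponent vector is a finitely supported map
nat =>0 nat; index 0 is the exponent of t, index j (1 <= j <= n) that of x_j.\<close>


definition in_ring :: "nat \<Rightarrow> ((nat \<Rightarrow>\<^sub>0 nat) \<Rightarrow>\<^sub>0 'k::zero) \<Rightarrow> bool" where
  "in_ring n p \<longleftrightarrow> (\<forall>m \<in> Poly_Mapping.keys p. Poly_Mapping.keys (m :: nat \<Rightarrow>\<^sub>0 nat) \<subseteq> {0..n})"

text \<open>The derivation D' = sum_{j=2}^n (j-1) x_{j-1} d/dx_j (kills t).\<close>
definition Dtil :: "nat \<Rightarrow> ((nat \<Rightarrow>\<^sub>0 nat) \<Rightarrow>\<^sub>0 'k::field_char_0) \<Rightarrow> ((nat \<Rightarrow>\<^sub>0 nat) \<Rightarrow>\<^sub>0 'k)" where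
  "Dtil n p = (\<Sum>m \<in> Poly_Mapping.keys p. \<Sum>j \<in> {2..n}.
      Poly_Mapping.single (m - Poly_Mapping.single j 1 + Poly_Mapping.single (j - 1) 1)
        (of_nat (j - 1) * of_nat (Poly_Mapping.lookup m j) * Poly_Mapping.lookup p m))"

text \<open>exp E (g) = sum_i E^i(g)/i!, for E locally nilpotent (the sum ranges over
the finitely many i with E^i(g) nonzero; all other terms vanish).\<close>
definition expder :: "(((nat \<Rightarrow>\<^sub>0 nat) \<Rightarrow>\<^sub>0 'k::field_char_0) \<Rightarrow> ((nat \<Rightarrow>\<^sub>0 nat) \<Rightarrow>\<^sub>0 'k)) \<Rightarrow> ((nat \<Rightarrow>\<^sub>0 nat) \<Rightarrow>\<^sub>0 'k) \<Rightarrow> ((nat \<Rightarrow>\<^sub>0 nat) \<Rightarrow>\<^sub>0 'k)" where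
  "expder E g = (\<Sum>i \<in> {i. (E ^^ i) g \<noteq> 0}.
      Poly_Mapping.single 0 (1 / fact i) * (E ^^ i) g)"

definition eps_til :: "nat \<Rightarrow> 'k::field_char_0 \<Rightarrow> ((nat \<Rightarrow>\<^sub>0 nat) \<Rightarrow>\<^sub>0 'k) \<Rightarrow> ((nat \<Rightarrow>\<^sub>0 nat) \<Rightarrow>\<^sub>0 'k)" where
  "eps_til n d = expder (\<lambda>g. Poly_Mapping.single 0 d * Dtil n g)"

definition deg_w3 :: "nat \<Rightarrow> ((nat \<Rightarrow>\<^sub>0 nat) \<Rightarrow>\<^sub>0 'k::zero) \<Rightarrow> nat" where
  "deg_w3 n p = Max ((\<lambda>m. \<Sum>j \<in> {1..n}. Poly_Mapping.lookup m j) ` Poly_Mapping.keys p)"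

text \<open>Lexicographic order with t > x_1 > ... > x_n (indices 0,1,...,n).\<close>
definition lex_less :: "nat \<Rightarrow> (nat \<Rightarrow>\<^sub>0 nat) \<Rightarrow> (nat \<Rightarrow>\<^sub>0 nat) \<Rightarrow> bool" where
  "lex_less n a b \<longleftrightarrow> (\<exists>i \<le> n. Poly_Mapping.lookup a i < Poly_Mapping.lookup b i \<and> (\<forall>j < i. Poly_Mapping.lookup a j = Poly_Mapping.lookup b j))"

definition lead_exp_is :: "nat \<Rightarrow> ((nat \<Rightarrow>\<^sub>0 nat) \<Rightarrow>\<^sub>0 'k::zero) \<Rightarrow> (nat \<Rightarrow>\<^sub>0 nat) \<Rightarrow> bool" where
  "lead_exp_is n p e \<longleftrightarrow> e \<in> Poly_Mapping.keys p \<and> (\<forall>m \<in> Poly_Mapping.keys p. m \<noteq> e \<longrightarrow> lex_less n m e)"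

definition Qset :: "nat \<Rightarrow> nat \<Rightarrow> nat \<Rightarrow> ((nat \<Rightarrow>\<^sub>0 nat) \<Rightarrow>\<^sub>0 'k::zero) set" where
  "Qset n \<alpha> \<beta> = {p. in_ring n p \<and> p \<noteq> 0 \<and> deg_w3 n p \<le> \<beta> \<and>
      lead_exp_is n p (Poly_Mapping.single 0 \<alpha> + Poly_Mapping.single 1 \<beta>)}"

definition Rset :: "nat \<Rightarrow> nat \<Rightarrow> nat \<Rightarrow> ((nat \<Rightarrow>\<^sub>0 nat) \<Rightarrow>\<^sub>0 'k::zero) set" where
  "Rset n \<alpha> \<beta> = {p. in_ring n p \<and> p \<noteq> 0 \<and> deg_w3 n p \<le> \<beta> \<and>
      lead_exp_is n p (Poly_Mapping.single 0 \<alpha> + Poly_Mapping.single n \<beta>)}"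

end

theory Submission
  imports Defs
begin


abbreviation e1 :: "nat \<Rightarrow> (nat \<Rightarrow>\<^sub>0 nat)" where "e1 j \<equiv> Poly_Mapping.single j 1"

lemma lookup_smul: "Poly_Mapping.lookup (Poly_Mapping.single 0 c * p) m = (c::'k::comm_ring_1) * Poly_Mapping.lookup p m"
  unfolding mult_map_scale_conv_mult[symmetric]
  by (simp add: Poly_Mapping.map.rep_eq when_def)

lemma keys_smul: "Poly_Mapping.keys (Poly_Mapping.single 0 (c::'k::comm_ring_1) * p) \<subseteq> Poly_Mapping.keys p"
  by (auto simp: in_keys_iff lookup_smul)

lemma Dtil_alt:
  assumes "finite K" "Poly_Mapping.keys p \<subseteq> K"
  shows "Dtil n p = (\<Sum>m \<in> K. \<Sum>j \<in> {2..n}.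
      Poly_Mapping.single (m - e1 j + e1 (j - 1))
        (of_nat (j - 1) * of_nat (Poly_Mapping.lookup m j) * Poly_Mapping.lookup p m))"
  unfolding Dtil_def
  by (rule sum.mono_neutral_left) (use assms in \<open>auto simp: in_keys_iff\<close>)

lemma Dtil_add: "Dtil n (p + q) = Dtil n p + Dtil n q"
proof -
  let ?K = "Poly_Mapping.keys p \<union> Poly_Mapping.keys q"
  have k: "Poly_Mapping.keys (p+q) \<subseteq> ?K" by (rule keys_add)
  have f: "finite ?K" by simp
  have kp: "Poly_Mapping.keys p \<subseteq> ?K" and kq: "Poly_Mapping.keys q \<subseteq> ?K" by auto
  show ?thesis
    unfolding Dtil_alt[OF f k] Dtil_alt[OF f kp] Dtil_alt[OF f kq]
    by (simp only: lookup_add distrib_left single_add sum.distrib)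
qed

lemma Dtil_smul: "Dtil n (Poly_Mapping.single 0 c * p) = Poly_Mapping.single 0 c * Dtil n p"
proof -
  have k: "Poly_Mapping.keys (Poly_Mapping.single 0 c * p) \<subseteq> Poly_Mapping.keys p" by (rule keys_smul)
  have f: "finite (Poly_Mapping.keys p)" by simp
  have "Dtil n (Poly_Mapping.single 0 c * p) = (\<Sum>m \<in> Poly_Mapping.keys p. \<Sum>j \<in> {2..n}.
      Poly_Mapping.single 0 c * Poly_Mapping.single (m - e1 j + e1 (j - 1))
        (of_nat (j - 1) * of_nat (Poly_Mapping.lookup m j) * Poly_Mapping.lookup p m))"
    unfolding Dtil_alt[OF f k] lookup_smul mult_single add_0
    by (simp only: mult.left_commute)
  also have "\<dots> = Poly_Mapping.single 0 c * Dtil n p"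
    unfolding Dtil_def by (simp add: sum_distrib_left)
  finally show ?thesis .
qed

lemma Dtil_zero: "Dtil n 0 = 0"
  by (simp add: Dtil_def)

lemma split_e1:
  assumes "Poly_Mapping.lookup m j \<noteq> 0"
  shows "m = (m - e1 j) + e1 j"
  by (rule poly_mapping_eqI) (use assms in \<open>auto simp: lookup_add lookup_minus lookup_single when_def\<close>)

lemma keys_Dtil:
  assumes "m' \<in> Poly_Mapping.keys (Dtil n p)"
  shows "\<exists>m''. \<exists>j\<in>{2..n}. m'' + e1 j \<in> Poly_Mapping.keys p \<and> m' = m'' + e1 (j - 1)"
proof -
  let ?T = "\<lambda>m j. Poly_Mapping.single (m - e1 j + e1 (j - 1))
        (of_nat (j - 1) * of_nat (Poly_Mapping.lookup m j) * Poly_Mapping.lookup p m)"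
  have "m' \<in> (\<Union>m\<in>Poly_Mapping.keys p. Poly_Mapping.keys (\<Sum>j \<in> {2..n}. ?T m j))"
    using assms unfolding Dtil_def by (rule subsetD[OF keys_sum])
  then obtain m where m: "m \<in> Poly_Mapping.keys p" and m1: "m' \<in> Poly_Mapping.keys (\<Sum>j \<in> {2..n}. ?T m j)"
    by (rule UN_E)
  have "m' \<in> (\<Union>j\<in>{2..n}. Poly_Mapping.keys (?T m j))"
    using m1 by (rule subsetD[OF keys_sum])
  then obtain j where j: "j \<in> {2..n}" and mj: "m' \<in> Poly_Mapping.keys (?T m j)"
    by (rule UN_E)
  have c: "of_nat (j - 1) * of_nat (Poly_Mapping.lookup m j) * Poly_Mapping.lookup p m \<noteq> 0"
    using mj by (auto split: if_splits)
  then have mm': "m' = m - e1 j + e1 (j - 1)" using mj by (simp split: if_splits)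
  have lj: "Poly_Mapping.lookup m j \<noteq> 0" using c by auto
  have mm: "m = (m - e1 j) + e1 j" by (rule split_e1[OF lj])
  show ?thesis
    by (rule exI[of _ "m - e1 j"], rule bexI[OF _ j]) (use mm mm' m in auto)
qed

definition xdeg :: "nat \<Rightarrow> (nat \<Rightarrow>\<^sub>0 nat) \<Rightarrow> nat" where
  "xdeg n m = (\<Sum>j \<in> {1..n}. Poly_Mapping.lookup m j)"
definition wt :: "nat \<Rightarrow> (nat \<Rightarrow>\<^sub>0 nat) \<Rightarrow> nat" where
  "wt n m = (\<Sum>j \<in> {1..n}. j * Poly_Mapping.lookup m j)"
definition ringm :: "nat \<Rightarrow> (nat \<Rightarrow>\<^sub>0 nat) \<Rightarrow> bool" where
  "ringm n m \<longleftrightarrow> (\<forall>i>n. Poly_Mapping.lookup m i = 0)"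

lemma xdeg_add: "xdeg n (a + b) = xdeg n a + xdeg n b"
  by (simp add: xdeg_def lookup_add sum.distrib)
lemma wt_add: "wt n (a + b) = wt n a + wt n b"
  by (simp add: wt_def lookup_add sum.distrib distrib_left)
lemma xdeg_e1: "1 \<le> j \<Longrightarrow> j \<le> n \<Longrightarrow> xdeg n (e1 j) = 1"
  by (simp add: xdeg_def lookup_single when_def)
lemma wt_e1: "1 \<le> j \<Longrightarrow> j \<le> n \<Longrightarrow> wt n (e1 j) = j"
  unfolding wt_def lookup_single when_def
  by (subst sum.cong[OF refl, where h="\<lambda>ja. if j = ja then j else 0"]) auto

lemma step_props:
  assumes "j \<in> {2..n}"
  shows "Poly_Mapping.lookup (m'' + e1 (j-1)) 0 = Poly_Mapping.lookup (m'' + e1 j) 0"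
    and "xdeg n (m'' + e1 (j-1)) = xdeg n (m'' + e1 j)"
    and "wt n (m'' + e1 (j-1)) + 1 = wt n (m'' + e1 j)"
    and "ringm n (m'' + e1 j) \<Longrightarrow> ringm n (m'' + e1 (j-1))"
proof -
  have j: "1 \<le> j - 1" "j - 1 \<le> n" "1 \<le> j" "j \<le> n" using assms by auto
  note a = xdeg_e1[OF j(1,2)] xdeg_e1[OF j(3,4)] wt_e1[OF j(1,2)] wt_e1[OF j(3,4)]
  show "Poly_Mapping.lookup (m'' + e1 (j-1)) 0 = Poly_Mapping.lookup (m'' + e1 j) 0"
    using j by (simp add: lookup_add lookup_single when_def)
  show "xdeg n (m'' + e1 (j-1)) = xdeg n (m'' + e1 j)"
    by (simp only: xdeg_add a)
  show "wt n (m'' + e1 (j-1)) + 1 = wt n (m'' + e1 j)"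
    using j by (simp only: wt_add a)
  show "ringm n (m'' + e1 j) \<Longrightarrow> ringm n (m'' + e1 (j-1))"
    using j by (auto simp: lookup_add lookup_single when_def ringm_def)
qed

lemma keys_Dtil_sub:
  assumes "\<And>m'' j. j \<in> {2..n} \<Longrightarrow> P (m'' + e1 j) \<Longrightarrow> Q (m'' + e1 (j - 1))"
    and "\<forall>m \<in> Poly_Mapping.keys p. P m"
  shows "\<forall>m \<in> Poly_Mapping.keys (Dtil n p). Q m"
proof
  fix m assume "m \<in> Poly_Mapping.keys (Dtil n p)"
  then obtain m'' j where "j \<in> {2..n}" "m'' + e1 j \<in> Poly_Mapping.keys p" "m = m'' + e1 (j - 1)"
    using keys_Dtil by blast
  then show "Q m" using assms by blast
qed

lemma Dpow_add: "(Dtil n ^^ i) (p + q) = (Dtil n ^^ i) p + (Dtil n ^^ i) q"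
  by (induction i) (simp_all add: Dtil_add)

lemma Dpow_smul: "(Dtil n ^^ i) (Poly_Mapping.single 0 c * p) = Poly_Mapping.single 0 c * (Dtil n ^^ i) p"
  by (induction i) (simp_all add: Dtil_smul)

lemma Epow: "((\<lambda>g. Poly_Mapping.single 0 d * Dtil n g) ^^ i) p = Poly_Mapping.single 0 (d ^ i) * (Dtil n ^^ i) p"
  by (induction i) (simp_all add: Dtil_smul mult_single mult.assoc[symmetric])

lemma Dpow_inv:
  assumes "\<And>m'' j. j \<in> {2..n} \<Longrightarrow> P (m'' + e1 j) \<Longrightarrow> P (m'' + e1 (j - 1))"
    and "\<forall>m \<in> Poly_Mapping.keys p. P m"
  shows "\<forall>m \<in> Poly_Mapping.keys ((Dtil n ^^ i) p). P m"
proof (induction i)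
  case 0 then show ?case using assms by simp
next
  case (Suc i)
  then show ?case
    using keys_Dtil_sub[of n P P "(Dtil n ^^ i) p", OF assms(1)] by simp
qed

lemma Dpow_wt:
  assumes "\<forall>m \<in> Poly_Mapping.keys p. wt n m \<le> W"
  shows "\<forall>m \<in> Poly_Mapping.keys ((Dtil n ^^ i) p). wt n m + i \<le> W"
proof (induction i)
  case 0 then show ?case using assms by simp
next
  case (Suc i)
  show ?case
  proof -
    have st: "wt n (m'' + e1 (j - 1)) + Suc i \<le> W" if "j \<in> {2..n}" "wt n (m'' + e1 j) + i \<le> W" for m'' j
      using step_props(3)[OF that(1), of m''] that(2) by simp
    have "\<forall>m \<in> Poly_Mapping.keys (Dtil n ((Dtil n ^^ i) p)). wt n m + Suc i \<le> W"
      by (rule keys_Dtil_sub[of n "\<lambda>m. wt n m + i \<le> W" "\<lambda>m. wt n m + Suc i \<le> W", OF st Suc])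
    then show ?thesis by simp
  qed
qed

lemma Dpow_wt_eq:
  assumes "\<forall>m \<in> Poly_Mapping.keys p. wt n m = W"
  shows "\<forall>m \<in> Poly_Mapping.keys ((Dtil n ^^ i) p). wt n m + i = W"
proof (induction i)
  case 0 then show ?case using assms by simp
next
  case (Suc i)
  show ?case
  proof -
    have st: "wt n (m'' + e1 (j - 1)) + Suc i = W" if "j \<in> {2..n}" "wt n (m'' + e1 j) + i = W" for m'' j
      using step_props(3)[OF that(1), of m''] that(2) by simp
    have "\<forall>m \<in> Poly_Mapping.keys (Dtil n ((Dtil n ^^ i) p)). wt n m + Suc i = W"
      by (rule keys_Dtil_sub[of n "\<lambda>m. wt n m + i = W" "\<lambda>m. wt n m + Suc i = W", OF st Suc])
    then show ?thesis by simp
  qed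
qed



definition nn :: "((nat \<Rightarrow>\<^sub>0 nat) \<Rightarrow>\<^sub>0 'k::field_char_0) \<Rightarrow> bool" where
  "nn p \<longleftrightarrow> (\<forall>m. \<exists>k::nat. Poly_Mapping.lookup p m = of_nat k)"

lemma Dtil_lookup_nat:
  assumes "\<And>m. Poly_Mapping.lookup p m = of_nat (f m)"
  shows "Poly_Mapping.lookup (Dtil n p) m' = of_nat (\<Sum>m \<in> Poly_Mapping.keys p. \<Sum>j \<in> {2..n}.
      if m - e1 j + e1 (j - 1) = m' then (j - 1) * Poly_Mapping.lookup m j * f m else 0)"
  unfolding Dtil_def lookup_sum of_nat_sum
  by (intro sum.cong refl) (auto simp: lookup_single when_def assms)

lemma nn_Dtil: "nn p \<Longrightarrow> nn (Dtil n p)"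
proof -
  assume "nn p"
  then obtain f where f: "\<And>m. Poly_Mapping.lookup p m = of_nat (f m)"
    unfolding nn_def by metis
  show ?thesis unfolding nn_def using Dtil_lookup_nat[OF f] by blast
qed

lemma nn_step:
  assumes "nn p" "j \<in> {2..n}" "m'' + e1 j \<in> Poly_Mapping.keys p"
  shows "m'' + e1 (j - 1) \<in> Poly_Mapping.keys (Dtil n p)"
proof -
  from assms(1) obtain f where f: "\<And>m. Poly_Mapping.lookup p m = of_nat (f m)"
    unfolding nn_def by metis
  let ?m = "m'' + e1 j"
  let ?g = "\<lambda>m j'. if m - e1 j' + e1 (j' - 1) = m'' + e1 (j - 1) then (j' - 1) * Poly_Mapping.lookup m j' * f m else 0"
  have fm: "f ?m > 0" using assms(3) f by (auto simp: in_keys_iff)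
  have lj: "Poly_Mapping.lookup ?m j > 0" by (simp add: lookup_add)
  have t: "?g ?m j > 0" using fm lj assms(2) by simp
  have "?g ?m j \<le> (\<Sum>j' \<in> {2..n}. ?g ?m j')"
    by (rule member_le_sum) (use assms(2) in auto)
  also have "\<dots> \<le> (\<Sum>m \<in> Poly_Mapping.keys p. \<Sum>j' \<in> {2..n}. ?g m j')"
    by (rule member_le_sum[where f="\<lambda>m. \<Sum>j' \<in> {2..n}. ?g m j'"]) (use assms(3) in auto)
  finally have "(\<Sum>m \<in> Poly_Mapping.keys p. \<Sum>j' \<in> {2..n}. ?g m j') \<noteq> 0" using t by linarith
  then show ?thesis
    unfolding in_keys_iff Dtil_lookup_nat[OF f] by (simp only: of_nat_eq_0_iff not_False_eq_True)
qed

lemma nn_single: "nn (Poly_Mapping.single m (1::'k::field_char_0))"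
  unfolding nn_def by (auto simp: lookup_single when_def intro: exI[of _ 0] exI[of _ 1])

lemma wt_xdeg: "wt n m = xdeg n m + (\<Sum>j \<in> {1..n}. (j - 1) * Poly_Mapping.lookup m j)"
proof -
  have "wt n m = (\<Sum>j \<in> {1..n}. Poly_Mapping.lookup m j + (j - 1) * Poly_Mapping.lookup m j)"
    unfolding wt_def
    by (intro sum.cong refl) (metis One_nat_def Suc_diff_le atLeastAtMost_iff diff_Suc_1 mult_Suc)
  then show ?thesis by (simp add: sum.distrib xdeg_def)
qed

abbreviation eQ :: "nat \<Rightarrow> nat \<Rightarrow> (nat \<Rightarrow>\<^sub>0 nat)" where
  "eQ \<alpha> \<beta> \<equiv> Poly_Mapping.single 0 \<alpha> + Poly_Mapping.single 1 \<beta>"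

lemma xdeg_split: "1 \<le> n \<Longrightarrow> xdeg n m = Poly_Mapping.lookup m 1 + (\<Sum>j \<in> {2..n}. Poly_Mapping.lookup m j)"
  unfolding xdeg_def by (simp add: sum.atLeast_Suc_atMost numeral_2_eq_2)

lemma eq_eQ:
  assumes "1 \<le> n" "ringm n m" "Poly_Mapping.lookup m 0 = \<alpha>" "Poly_Mapping.lookup m 1 = \<beta>"
    "\<forall>j\<in>{2..n}. Poly_Mapping.lookup m j = 0"
  shows "m = eQ \<alpha> \<beta>"
proof (rule poly_mapping_eqI)
  fix i
  show "Poly_Mapping.lookup m i = Poly_Mapping.lookup (eQ \<alpha> \<beta>) i"
    using assms unfolding ringm_def
    by (cases "i = 0"; cases "i = 1"; cases "i \<le> n") (auto simp: lookup_add lookup_single when_def)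
qed

lemma chain:
  assumes "1 \<le> n"
  shows "nn p \<Longrightarrow> m \<in> Poly_Mapping.keys p \<Longrightarrow> ringm n m \<Longrightarrow> Poly_Mapping.lookup m 0 = \<alpha> \<Longrightarrow>
    xdeg n m = \<beta> \<Longrightarrow> wt n m = \<beta> + k \<Longrightarrow> eQ \<alpha> \<beta> \<in> Poly_Mapping.keys ((Dtil n ^^ k) p)"
proof (induction k arbitrary: p m)
  case 0
  then have "(\<Sum>j \<in> {1..n}. (j - 1) * Poly_Mapping.lookup m j) = 0" using wt_xdeg[of n m] by simp
  then have z0: "\<forall>j\<in>{1..n}. (j - 1) * Poly_Mapping.lookup m j = 0" by simp
  have z: "\<forall>j\<in>{2..n}. Poly_Mapping.lookup m j = 0"
  proof
    fix j assume "j \<in> {2..n}"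
    then have "j \<in> {1..n}" "j - 1 \<noteq> 0" by auto
    then show "Poly_Mapping.lookup m j = 0" using z0 by auto
  qed
  then have "Poly_Mapping.lookup m 1 = \<beta>" using xdeg_split[OF assms, of m] 0 by simp
  then have "m = eQ \<alpha> \<beta>" using eq_eQ[OF assms] z 0 by blast
  then show ?case using 0 by simp
next
  case (Suc k)
  then have "(\<Sum>j \<in> {1..n}. (j - 1) * Poly_Mapping.lookup m j) \<noteq> 0" using wt_xdeg[of n m] by simp
  then obtain j where j1: "j \<in> {1..n}" and j2: "(j - 1) * Poly_Mapping.lookup m j \<noteq> 0"
    by (meson sum.neutral)
  then have j: "j \<in> {2..n}" and lj: "Poly_Mapping.lookup m j \<noteq> 0" by auto
  define m'' where "m'' = m - e1 j"
  have m: "m = m'' + e1 j" unfolding m''_def by (rule split_e1[OF lj])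
  let ?m' = "m'' + e1 (j - 1)"
  have k: "?m' \<in> Poly_Mapping.keys (Dtil n p)" using nn_step[OF Suc.prems(1) j] Suc.prems(2) m by simp
  have sp: "Poly_Mapping.lookup ?m' 0 = \<alpha>" "xdeg n ?m' = \<beta>" "wt n ?m' = \<beta> + k" "ringm n ?m'"
    using step_props[OF j, of m''] Suc.prems m by auto
  have "eQ \<alpha> \<beta> \<in> Poly_Mapping.keys ((Dtil n ^^ k) (Dtil n p))"
    by (rule Suc.IH[OF nn_Dtil[OF Suc.prems(1)] k sp(4,1,2,3)])
  then show ?case by (simp only: funpow_Suc_right comp_apply)
qed



lemma wt_single: "wt n (Poly_Mapping.single k v) = (if 1 \<le> k \<and> k \<le> n then k * v else 0)"
  unfolding wt_def lookup_single when_def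
  by (subst sum.cong[OF refl, where h="\<lambda>j. if k = j then k * v else 0"]) auto

lemma xdeg_single: "xdeg n (Poly_Mapping.single k v) = (if 1 \<le> k \<and> k \<le> n then v else 0)"
  unfolding xdeg_def lookup_single when_def
  by (subst sum.cong[OF refl, where h="\<lambda>j. if k = j then v else 0"]) auto

lemma lexQ:
  assumes "1 \<le> n" "ringm n m" "Poly_Mapping.lookup m 0 \<le> \<alpha>" "xdeg n m \<le> \<beta>" "m \<noteq> eQ \<alpha> \<beta>"
  shows "lex_less n m (eQ \<alpha> \<beta>)"
proof -
  have q0: "Poly_Mapping.lookup (eQ \<alpha> \<beta>) 0 = \<alpha>" and q1: "Poly_Mapping.lookup (eQ \<alpha> \<beta>) 1 = \<beta>"
    by (simp_all add: lookup_add lookup_single)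
  show ?thesis
  proof (cases "Poly_Mapping.lookup m 0 < \<alpha>")
    case True
    then show ?thesis unfolding lex_less_def using q0 by (intro exI[of _ 0]) auto
  next
    case False
    then have m0: "Poly_Mapping.lookup m 0 = \<alpha>" using assms(3) by simp
    show ?thesis
    proof (cases "Poly_Mapping.lookup m 1 < \<beta>")
      case True
      then show ?thesis unfolding lex_less_def using q0 q1 m0 assms(1)
        by (intro exI[of _ 1]) auto
    next
      case False
      have xs: "Poly_Mapping.lookup m 1 + (\<Sum>j \<in> {2..n}. Poly_Mapping.lookup m j) \<le> \<beta>"
        using xdeg_split[OF assms(1), of m] assms(4) by simp
      then have m1: "Poly_Mapping.lookup m 1 = \<beta>" and s0: "(\<Sum>j \<in> {2..n}. Poly_Mapping.lookup m j) = 0"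
        using False by linarith+
      from s0 have "\<forall>j\<in>{2..n}. Poly_Mapping.lookup m j = 0" by simp
      then have "m = eQ \<alpha> \<beta>" using eq_eQ[OF assms(1,2) m0 m1] by blast
      then show ?thesis using assms(5) by simp
    qed
  qed
qed

lemma lexR:
  assumes "1 \<le> n" "lex_less n m (Poly_Mapping.single 0 \<alpha> + Poly_Mapping.single n \<beta>)"
  shows "Poly_Mapping.lookup m 0 < \<alpha> \<or> (Poly_Mapping.lookup m 0 = \<alpha> \<and> xdeg n m < \<beta>)"
proof -
  let ?R = "Poly_Mapping.single 0 \<alpha> + Poly_Mapping.single n \<beta>"
  have R: "Poly_Mapping.lookup ?R i = (if i = 0 then \<alpha> else if i = n then \<beta> else 0)" for i
    using assms(1) by (auto simp: lookup_add lookup_single when_def)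
  obtain i where i: "i \<le> n" "Poly_Mapping.lookup m i < Poly_Mapping.lookup ?R i"
    "\<forall>j<i. Poly_Mapping.lookup m j = Poly_Mapping.lookup ?R j"
    using assms(2) unfolding lex_less_def by blast
  show ?thesis
  proof (cases "i = 0")
    case True then show ?thesis using i R by simp
  next
    case False
    then have m0: "Poly_Mapping.lookup m 0 = \<alpha>" using i(3) R[of 0] by auto
    have "i = n" using i R[of i] False by (auto split: if_splits)
    then have mn: "Poly_Mapping.lookup m n < \<beta>" and z: "\<forall>j<n. j \<noteq> 0 \<longrightarrow> Poly_Mapping.lookup m j = 0"
      using i R assms(1) False by auto
    have "xdeg n m = (\<Sum>j \<in> {1..n}. if j = n then Poly_Mapping.lookup m n else 0)"
      unfolding xdeg_def using z by (intro sum.cong refl) auto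
    also have "\<dots> = Poly_Mapping.lookup m n" using assms(1) by simp
    finally show ?thesis using m0 mn by simp
  qed
qed



theorem lemma5p2:
  fixes n \<alpha> \<beta> :: nat and d :: int
  assumes "n \<ge> 3" and "\<alpha> \<ge> 1" and "\<beta> \<ge> 1" and "d \<noteq> 0"
  shows "eps_til n (of_int d :: 'k::field_char_0) ` Rset n \<alpha> \<beta> \<subseteq> Qset n \<alpha> \<beta>"
proof (rule subsetI)
  fix q :: "(nat \<Rightarrow>\<^sub>0 nat) \<Rightarrow>\<^sub>0 'k"
  assume "q \<in> eps_til n (of_int d :: 'k) ` Rset n \<alpha> \<beta>"
  then obtain p where pR: "p \<in> Rset n \<alpha> \<beta>" and qdef: "q = eps_til n (of_int d :: 'k) p" by blast
  define c where "c = (of_int d :: 'k)"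
  have c0: "c \<noteq> 0" using assms(4) by (simp add: c_def)
  have n1: "1 \<le> n" using assms(1) by simp
  define eR where "eR = Poly_Mapping.single 0 \<alpha> + Poly_Mapping.single n \<beta>"
  define D where "D = (Dtil n :: ((nat \<Rightarrow>\<^sub>0 nat) \<Rightarrow>\<^sub>0 'k) \<Rightarrow> _)"
  have pring0: "in_ring n p" and p0: "p \<noteq> 0" and pdeg0: "deg_w3 n p \<le> \<beta>"
    and plead: "lead_exp_is n p eR"
    using pR unfolding Rset_def eR_def by auto
  have pring: "\<forall>m\<in>Poly_Mapping.keys p. ringm n m"
    using pring0 unfolding in_ring_def ringm_def
    by (meson atLeastAtMost_iff in_keys_iff not_le subsetD)
  have kne: "Poly_Mapping.keys p \<noteq> {}" using p0 by simp
  have pdeg: "\<forall>m\<in>Poly_Mapping.keys p. xdeg n m \<le> \<beta>"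
    using pdeg0 kne unfolding deg_w3_def xdeg_def by (simp add: Max_le_iff)
  have eRk: "eR \<in> Poly_Mapping.keys p" using plead unfolding lead_exp_is_def by simp
  have eR0: "Poly_Mapping.lookup eR 0 = \<alpha>" using n1 by (simp add: eR_def lookup_add lookup_single)
  have eRx: "xdeg n eR = \<beta>" using n1 by (simp add: eR_def xdeg_add xdeg_single)
  have eRw: "wt n eR = n * \<beta>" using n1 by (simp add: eR_def wt_add wt_single)
  have eRr: "ringm n eR" by (simp add: eR_def ringm_def lookup_add lookup_single)
  have eQ0: "Poly_Mapping.lookup (eQ \<alpha> \<beta>) 0 = \<alpha>" by (simp add: lookup_add lookup_single)
  have eQx: "xdeg n (eQ \<alpha> \<beta>) = \<beta>" using n1 by (simp add: xdeg_add xdeg_single)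
  have eQw: "wt n (eQ \<alpha> \<beta>) = \<beta>" using n1 by (simp add: wt_add wt_single)
  have pt: "\<forall>m\<in>Poly_Mapping.keys p. Poly_Mapping.lookup m 0 \<le> \<alpha> \<and>
      (m \<noteq> eR \<longrightarrow> Poly_Mapping.lookup m 0 < \<alpha> \<or> xdeg n m < \<beta>)"
  proof
    fix m assume m: "m \<in> Poly_Mapping.keys p"
    show "Poly_Mapping.lookup m 0 \<le> \<alpha> \<and> (m \<noteq> eR \<longrightarrow> Poly_Mapping.lookup m 0 < \<alpha> \<or> xdeg n m < \<beta>)"
    proof (cases "m = eR")
      case True then show ?thesis using eR0 by simp
    next
      case False
      then have "lex_less n m eR" using plead m unfolding lead_exp_is_def by blast
      then show ?thesis using lexR[OF n1, of m \<alpha> \<beta>] unfolding eR_def by auto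
    qed
  qed
  define W where "W = Max (wt n ` Poly_Mapping.keys p)"
  have wtle: "\<forall>m\<in>Poly_Mapping.keys p. wt n m \<le> W" unfolding W_def by simp
  have "wt n eR \<le> W" using wtle eRk by blast
  then have nbW: "n * \<beta> \<le> W" using eRw by simp
  have nil: "(D ^^ i) p = 0" if "W < i" for i
  proof -
    have "\<forall>m \<in> Poly_Mapping.keys ((D ^^ i) p). wt n m + i \<le> W"
      unfolding D_def by (rule Dpow_wt[OF wtle])
    then have "Poly_Mapping.keys ((D ^^ i) p) = {}" using that by fastforce
    then show ?thesis by simp
  qed
  have qeq: "q = (\<Sum>i \<in> {..W}. Poly_Mapping.single 0 (1 / fact i) * (Poly_Mapping.single 0 (c ^ i) * (D ^^ i) p))"
    unfolding qdef eps_til_def expder_def Epow unfolding c_def[symmetric] D_def[symmetric]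
  proof (rule sum.mono_neutral_left)
    show "finite {..W}" by simp
    show "{i. Poly_Mapping.single 0 (c ^ i) * (D ^^ i) p \<noteq> 0} \<subseteq> {..W}"
    proof
      fix i assume i: "i \<in> {i. Poly_Mapping.single 0 (c ^ i) * (D ^^ i) p \<noteq> 0}"
      show "i \<in> {..W}"
      proof (rule ccontr)
        assume "i \<notin> {..W}"
        then have "W < i" by simp
        then show False using i nil by simp
      qed
    qed
    show "\<forall>i\<in>{..W} - {i. Poly_Mapping.single 0 (c ^ i) * (D ^^ i) p \<noteq> 0}.
        Poly_Mapping.single 0 (1 / fact i) * (Poly_Mapping.single 0 (c ^ i) * (D ^^ i) p) = 0"
      by simp
  qed
  let ?P = "\<lambda>m. ringm n m \<and> Poly_Mapping.lookup m 0 \<le> \<alpha> \<and> xdeg n m \<le> \<beta>"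
  have Pcl: "?P (m'' + e1 (j - 1))" if "j \<in> {2..n}" "?P (m'' + e1 j)" for m'' j
  proof -
    note s = step_props[OF that(1), of m'']
    show ?thesis using that(2) s(4) unfolding s(1) s(2) by blast
  qed
  have Pq: "\<forall>m\<in>Poly_Mapping.keys q. ?P m"
  proof
    fix m assume mq: "m \<in> Poly_Mapping.keys q"
    have "m \<in> (\<Union>i\<in>{..W}. Poly_Mapping.keys (Poly_Mapping.single 0 (1 / fact i) * (Poly_Mapping.single 0 (c ^ i) * (D ^^ i) p)))"
      using mq unfolding qeq by (rule subsetD[OF keys_sum])
    then obtain i where "m \<in> Poly_Mapping.keys (Poly_Mapping.single 0 (1 / fact i) * (Poly_Mapping.single 0 (c ^ i) * (D ^^ i) p))"
      by (rule UN_E)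
    then have "m \<in> Poly_Mapping.keys (Poly_Mapping.single 0 (c ^ i) * (D ^^ i) p)"
      by (rule subsetD[OF keys_smul])
    then have "m \<in> Poly_Mapping.keys ((D ^^ i) p)"
      by (rule subsetD[OF keys_smul])
    moreover have "\<forall>m \<in> Poly_Mapping.keys ((D ^^ i) p). ?P m"
      unfolding D_def by (rule Dpow_inv[of n ?P, OF Pcl]) (use pring pt pdeg in auto)
    ultimately show "?P m" by blast
  qed
  define a where "a = Poly_Mapping.lookup p eR"
  have a0: "a \<noteq> 0" using eRk by (simp add: a_def in_keys_iff)
  define r where "r = p - Poly_Mapping.single eR a"
  have pdec: "p = Poly_Mapping.single 0 a * Poly_Mapping.single eR 1 + r"
    by (simp add: r_def mult_single)
  let ?Pr = "\<lambda>m. ringm n m \<and> Poly_Mapping.lookup m 0 \<le> \<alpha> \<and> xdeg n m \<le> \<beta> \<and>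
     (Poly_Mapping.lookup m 0 < \<alpha> \<or> xdeg n m < \<beta>)"
  have Prcl: "?Pr (m'' + e1 (j - 1))" if "j \<in> {2..n}" "?Pr (m'' + e1 j)" for m'' j
  proof -
    note s = step_props[OF that(1), of m'']
    show ?thesis using that(2) s(4) unfolding s(1) s(2) by blast
  qed
  have rk: "\<forall>m\<in>Poly_Mapping.keys r. ?Pr m"
  proof
    fix m assume m: "m \<in> Poly_Mapping.keys r"
    then have "m \<noteq> eR" by (auto simp: r_def in_keys_iff lookup_minus a_def)
    moreover have "m \<in> Poly_Mapping.keys p" using m
      by (auto simp: r_def a_def in_keys_iff lookup_minus lookup_single when_def split: if_splits)
    ultimately show "?Pr m" using pring pt pdeg by auto
  qed
  have r0: "Poly_Mapping.lookup ((D ^^ i) r) (eQ \<alpha> \<beta>) = 0" for i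
  proof -
    have "\<forall>m \<in> Poly_Mapping.keys ((D ^^ i) r). ?Pr m"
      unfolding D_def by (rule Dpow_inv[of n ?Pr, OF Prcl rk])
    then have "eQ \<alpha> \<beta> \<notin> Poly_Mapping.keys ((D ^^ i) r)" using eQ0 eQx by auto
    then show ?thesis by (simp add: in_keys_iff)
  qed
  define K where "K i = Poly_Mapping.lookup ((D ^^ i) (Poly_Mapping.single eR 1)) (eQ \<alpha> \<beta>)" for i
  have Dp: "Poly_Mapping.lookup ((D ^^ i) p) (eQ \<alpha> \<beta>) = a * K i" for i
  proof -
    have "(D ^^ i) p = Poly_Mapping.single 0 a * (D ^^ i) (Poly_Mapping.single eR 1) + (D ^^ i) r"
      by (subst pdec) (simp only: D_def Dpow_add Dpow_smul)
    then have "Poly_Mapping.lookup ((D ^^ i) p) (eQ \<alpha> \<beta>) = a * K i + Poly_Mapping.lookup ((D ^^ i) r) (eQ \<alpha> \<beta>)"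
      by (simp only: lookup_add lookup_smul K_def)
    then show ?thesis using r0[of i] by simp
  qed
  define N where "N = n * \<beta> - \<beta>"
  have KN: "K N \<noteq> 0"
  proof -
    have "eQ \<alpha> \<beta> \<in> Poly_Mapping.keys ((Dtil n ^^ N) (Poly_Mapping.single eR (1::'k)))"
      by (rule chain[OF n1 nn_single]) (use eRr eR0 eRx eRw n1 in \<open>auto simp: N_def\<close>)
    then show ?thesis by (simp add: K_def D_def in_keys_iff)
  qed
  have Kz: "K i = 0" if "i \<noteq> N" for i
  proof -
    have "\<forall>m \<in> Poly_Mapping.keys ((Dtil n ^^ i) (Poly_Mapping.single eR (1::'k))). wt n m + i = n * \<beta>"
      by (rule Dpow_wt_eq) (simp add: eRw)
    then have "eQ \<alpha> \<beta> \<notin> Poly_Mapping.keys ((Dtil n ^^ i) (Poly_Mapping.single eR (1::'k)))"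
      using eQw that unfolding N_def by fastforce
    then show ?thesis by (simp add: K_def D_def in_keys_iff)
  qed
  define f where "f i = 1 / fact i * (c ^ i * (a * K i))" for i
  have lq: "Poly_Mapping.lookup q (eQ \<alpha> \<beta>) = (\<Sum>i \<in> {..W}. f i)"
    unfolding qeq lookup_sum lookup_smul Dp f_def by simp
  have NW: "N \<in> {..W}" using nbW by (simp add: N_def)
  have "(\<Sum>i \<in> {..W}. f i) = f N + (\<Sum>i \<in> {..W} - {N}. f i)"
    by (rule sum.remove[OF _ NW]) simp
  also have "(\<Sum>i \<in> {..W} - {N}. f i) = 0" by (rule sum.neutral) (simp add: f_def Kz)
  finally have "Poly_Mapping.lookup q (eQ \<alpha> \<beta>) = f N" using lq by simp
  also have "f N \<noteq> 0" using KN a0 c0 by (simp add: f_def)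
  finally have eQk: "eQ \<alpha> \<beta> \<in> Poly_Mapping.keys q" by (simp add: in_keys_iff)
  have q0: "q \<noteq> 0" using eQk by auto
  show "q \<in> Qset n \<alpha> \<beta>"
    unfolding Qset_def
  proof (intro CollectI conjI)
    show "in_ring n q" unfolding in_ring_def
    proof
      fix m assume "m \<in> Poly_Mapping.keys q"
      then have "ringm n m" using Pq by blast
      then show "Poly_Mapping.keys m \<subseteq> {0..n}"
        unfolding ringm_def by (auto simp: in_keys_iff) (metis gr_implies_not0 not_le)
    qed
    show "q \<noteq> 0" by (rule q0)
    show "deg_w3 n q \<le> \<beta>"
      unfolding deg_w3_def using Pq q0 by (simp add: Max_le_iff xdeg_def)
    show "lead_exp_is n q (Poly_Mapping.single 0 \<alpha> + Poly_Mapping.single 1 \<beta>)"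
      unfolding lead_exp_is_def
    proof (intro conjI ballI impI)
      show "eQ \<alpha> \<beta> \<in> Poly_Mapping.keys q" by (rule eQk)
      fix m assume "m \<in> Poly_Mapping.keys q" "m \<noteq> eQ \<alpha> \<beta>"
      then show "lex_less n m (eQ \<alpha> \<beta>)" using Pq lexQ[OF n1, of m \<alpha> \<beta>] by simp
    qed
  qed
qed


end
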